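(* Let $Z$ be a critical Galton–Watson process with $Z_0=1$ and non-degenerate offspring variable $\xi$ (i.e. $\mathbf{E}\xi=1$ and $\mathbf{P}(\xi=1)<1$). There exist finite constants $c_1,c_2$ such that $$\mathbf{P}(M_{m+1}\geq k)\leq c_1\frac{mB_k}{k^2}+m\,\mathbf{P}(\xi>k/2)$$ for all integers $k,m\geq1$ satisfying $k/(mB_k)>c_2$.
   Context: $M_m:=\max_{0\leq l\leq m-1}Z_l$. For $R\geq2$, $B_R:=\mathbf{E}\{\xi(\xi-1);\,\xi\leq R\}$. No index-$(1+\alpha)$ assumption is made here. *)

theory Defs
  imports "HOL-Probability.Probability"
begin

fun offspring_sum :: "nat pmf \<Rightarrow> nat \<Rightarrow> nat pmf" where
  "offspring_sum p 0 = return_pmf 0"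
| "offspring_sum p (Suc z) = bind_pmf p (\<lambda>a. map_pmf (\<lambda>b. a + b) (offspring_sum p z))"

text \<open>Joint law of the path [Z_0, Z_1, ..., Z_n] of the Galton-Watson process with
  offspring law p and Z_0 = 1 (Markov chain: given Z_l = z, Z_(l+1) is a sum of z iid
  offspring variables).\<close>
fun gw_path :: "nat pmf \<Rightarrow> nat \<Rightarrow> nat list pmf" where
  "gw_path p 0 = return_pmf [1]"
| "gw_path p (Suc n) =
     bind_pmf (gw_path p n) (\<lambda>xs. map_pmf (\<lambda>z. xs @ [z]) (offspring_sum p (last xs)))"

text \<open>M_m = max_{0 \<le> l \<le> m-1} Z_l, evaluated on a path [Z_0,...,Z_(m-1)].\<close>
definition path_max :: "nat list \<Rightarrow> nat" where
  "path_max xs = Max (set xs)"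

definition trunc_B :: "nat pmf \<Rightarrow> nat \<Rightarrow> real" where
  "trunc_B p R = (\<Sum>x\<le>R. real x * (real x - 1) * pmf p x)"

end

theory Submission
  imports Defs
begin

lemma offs_lin:
  fixes p :: "nat pmf"
  assumes mean: "(\<integral>\<^sup>+ x. ennreal (real x) \<partial>measure_pmf p) = 1"
  shows "\<forall>c. (\<integral>\<^sup>+ s. of_nat (min (c + s) k) \<partial>measure_pmf (offspring_sum p z)) \<le> (of_nat (c + z) :: ennreal)"
proof (induction z)
  case 0
  then show ?case by (auto simp: of_nat_mono)
next
  case (Suc z)
  show ?case
  proof
    fix c
    have "(\<integral>\<^sup>+ s. of_nat (min (c + s) k) \<partial>measure_pmf (offspring_sum p (Suc z)))
        = (\<integral>\<^sup>+ a. (\<integral>\<^sup>+ s. of_nat (min (c + min a k + s) k) \<partial>measure_pmf (offspring_sum p z)) \<partial>p)"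
      by (auto intro!: nn_integral_cong simp: min_def)
    also have "\<dots> \<le> (\<integral>\<^sup>+ a. of_nat c + of_nat z + ennreal (real a) \<partial>p)"
    proof (rule nn_integral_mono)
      fix a
      have "(\<integral>\<^sup>+ s. of_nat (min (c + min a k + s) k) \<partial>measure_pmf (offspring_sum p z)) \<le> of_nat (c + min a k + z)"
        using Suc.IH by blast
      also have "\<dots> \<le> of_nat c + of_nat z + ennreal (real a)"
        by (simp add: ennreal_of_nat_eq_real_of_nat[symmetric] of_nat_mono add.commute add.left_commute)
      finally show "(\<integral>\<^sup>+ s. of_nat (min (c + min a k + s) k) \<partial>measure_pmf (offspring_sum p z)) \<le> of_nat c + of_nat z + ennreal (real a)" .
    qed
    also have "\<dots> = of_nat c + of_nat z + (\<integral>\<^sup>+ a. ennreal (real a) \<partial>p)"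
      by (subst nn_integral_add) (auto simp: emeasure_pmf)
    also have "\<dots> = of_nat (c + Suc z)" using mean by simp
    finally show "(\<integral>\<^sup>+ s. of_nat (min (c + s) k) \<partial>measure_pmf (offspring_sum p (Suc z))) \<le> of_nat (c + Suc z)" .
  qed
qed

definition tr :: "nat \<Rightarrow> nat \<Rightarrow> nat" where "tr k a = (if k < 2*a then 0 else a)"

lemma offs_sq:
  fixes p :: "nat pmf" and k z :: nat
  assumes mean: "(\<integral>\<^sup>+ x. ennreal (real x) \<partial>measure_pmf p) = 1"
  defines "V \<equiv> (\<integral>\<^sup>+ a. of_nat ((tr k a)^2) \<partial>measure_pmf p)"
  defines "Pb \<equiv> emeasure (measure_pmf p) {x. k < 2*x}"
  shows "\<forall>c. (\<integral>\<^sup>+ s. of_nat ((min (c + s) k)^2) \<partial>measure_pmf (offspring_sum p z))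
     \<le> of_nat ((c + z)^2) + of_nat z * V + of_nat (k^2) * of_nat z * Pb"
proof (induction z)
  case 0
  then show ?case by (auto simp: of_nat_mono power_mono)
next
  case (Suc z)
  show ?case
  proof
    fix c
    define K where "K = of_nat z * V + of_nat (k^2) * of_nat z * Pb"
    have "(\<integral>\<^sup>+ s. of_nat ((min (c + s) k)^2) \<partial>measure_pmf (offspring_sum p (Suc z)))
        = (\<integral>\<^sup>+ a. (\<integral>\<^sup>+ s. of_nat ((min (c + a + s) k)^2) \<partial>measure_pmf (offspring_sum p z)) \<partial>p)"
      by (simp add: add.assoc)
    also have "\<dots> \<le> (\<integral>\<^sup>+ a. of_nat ((c+z)^2) + of_nat (2*(c+z)) * of_nat (tr k a) + of_nat ((tr k a)^2)
         + K + of_nat (k^2) * indicator {x. k < 2*x} a \<partial>p)"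
    proof (rule nn_integral_mono)
      fix a
      show "(\<integral>\<^sup>+ s. of_nat ((min (c + a + s) k)^2) \<partial>measure_pmf (offspring_sum p z)) \<le>
         of_nat ((c+z)^2) + of_nat (2*(c+z)) * of_nat (tr k a) + of_nat ((tr k a)^2)
         + K + of_nat (k^2) * indicator {x. k < 2*x} a"
      proof (cases "k < 2*a")
        case True
        have "(\<integral>\<^sup>+ s. of_nat ((min (c + a + s) k)^2) \<partial>measure_pmf (offspring_sum p z))
           \<le> (\<integral>\<^sup>+ s. of_nat (k^2) \<partial>measure_pmf (offspring_sum p z))"
          by (rule nn_integral_mono) (simp add: power_mono)
        also have "\<dots> = of_nat (k^2)" by (simp add: emeasure_pmf)
        also have "\<dots> \<le> of_nat ((c+z)^2) + of_nat (2*(c+z)) * of_nat (tr k a) + of_nat ((tr k a)^2)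
         + K + of_nat (k^2) * indicator {x. k < 2*x} a"
          using True by simp
        finally show ?thesis .
      next
        case False
        have "(\<integral>\<^sup>+ s. of_nat ((min (c + a + s) k)^2) \<partial>measure_pmf (offspring_sum p z))
            \<le> of_nat ((c + a + z)^2) + K"
          using spec[OF Suc.IH, of "c + a"] unfolding K_def by (simp only: add.assoc)
        also have "of_nat ((c + a + z)^2) = (of_nat ((c+z)^2) + of_nat (2*(c+z)) * of_nat (tr k a) + of_nat ((tr k a)^2) :: ennreal)"
        proof -
          have "(c + a + z)^2 = (c+z)^2 + 2*(c+z)*tr k a + (tr k a)^2"
            using False unfolding tr_def by (simp add: power2_eq_square algebra_simps)
          then show ?thesis by (simp only: of_nat_add of_nat_mult)
        qed
        finally show ?thesis using False by simp
      qed
    qed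
    also have "\<dots> = of_nat ((c+z)^2) + of_nat (2*(c+z)) * (\<integral>\<^sup>+ a. of_nat (tr k a) \<partial>p) + V
         + K + of_nat (k^2) * Pb"
      unfolding V_def Pb_def
      by (simp add: nn_integral_add nn_integral_cmult emeasure_pmf)
    also have "\<dots> \<le> of_nat ((c+z)^2) + of_nat (2*(c+z)) * 1 + V + K + of_nat (k^2) * Pb"
    proof -
      have "(\<integral>\<^sup>+ a. of_nat (tr k a) \<partial>p) \<le> (\<integral>\<^sup>+ a. ennreal (real a) \<partial>p)"
        by (rule nn_integral_mono) (simp add: tr_def ennreal_of_nat_eq_real_of_nat)
      then show ?thesis using mean by (intro add_mono mult_left_mono) auto
    qed
    also have "\<dots> \<le> of_nat ((c + Suc z)^2) + of_nat (Suc z) * V + of_nat (k^2) * of_nat (Suc z) * Pb"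
    proof -
      have e1: "(c + Suc z)^2 = (c+z)^2 + 2*(c+z) + 1" by (simp add: power2_eq_square)
      have "of_nat ((c + Suc z)^2) + of_nat (Suc z) * V + of_nat (k^2) * of_nat (Suc z) * Pb
         = (of_nat ((c+z)^2) + of_nat (2*(c+z)) * 1 + V + K + of_nat (k^2) * Pb) + (1::ennreal)"
        unfolding e1 K_def of_nat_add of_nat_Suc by (simp only: distrib_left distrib_right mult_1_right mult_1_left of_nat_1 add_ac)
      then show ?thesis by simp
    qed
    finally show "(\<integral>\<^sup>+ s. of_nat ((min (c + s) k)^2) \<partial>measure_pmf (offspring_sum p (Suc z)))
     \<le> of_nat ((c + Suc z)^2) + of_nat (Suc z) * V + of_nat (k^2) * of_nat (Suc z) * Pb" .
  qed
qed

lemma gw_nonempty: "xs \<in> set_pmf (gw_path p n) \<Longrightarrow> xs \<noteq> []"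
  by (induction n arbitrary: xs) auto

lemma path_max_snoc: "xs \<noteq> [] \<Longrightarrow> path_max (xs @ [z]) = max z (path_max xs)"
  unfolding path_max_def by (simp add: Max_insert)

lemma last_le_path_max: "xs \<noteq> [] \<Longrightarrow> last xs \<le> path_max xs"
  unfolding path_max_def by simp

definition Rf :: "nat \<Rightarrow> nat list \<Rightarrow> ennreal" where
  "Rf k xs = (if k \<le> path_max xs then 0 else of_nat (min (last xs) k))"

definition Phi :: "nat \<Rightarrow> nat list \<Rightarrow> ennreal" where
  "Phi k xs = of_nat (if k \<le> path_max xs then k^2 else (min (last xs) k)^2)"

lemma path_R:
  fixes p :: "nat pmf"
  assumes mean: "(\<integral>\<^sup>+ x. ennreal (real x) \<partial>measure_pmf p) = 1"
  shows "(\<integral>\<^sup>+ xs. Rf k xs \<partial>measure_pmf (gw_path p n)) \<le> 1"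
proof (induction n)
  case 0
  then show ?case by (simp add: Rf_def path_max_def)
next
  case (Suc n)
  have "(\<integral>\<^sup>+ xs. Rf k xs \<partial>measure_pmf (gw_path p (Suc n)))
      = (\<integral>\<^sup>+ xs. (\<integral>\<^sup>+ z. Rf k (xs @ [z]) \<partial>measure_pmf (offspring_sum p (last xs))) \<partial>gw_path p n)"
    by simp
  also have "\<dots> \<le> (\<integral>\<^sup>+ xs. Rf k xs \<partial>gw_path p n)"
  proof (rule nn_integral_mono_AE, rule AE_pmfI)
    fix xs assume xs: "xs \<in> set_pmf (gw_path p n)"
    then have ne: "xs \<noteq> []" by (rule gw_nonempty)
    show "(\<integral>\<^sup>+ z. Rf k (xs @ [z]) \<partial>measure_pmf (offspring_sum p (last xs))) \<le> Rf k xs"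
    proof (cases "k \<le> path_max xs")
      case True
      then have "\<And>z. Rf k (xs @ [z]) = 0" using ne by (simp add: Rf_def path_max_snoc)
      then show ?thesis by simp
    next
      case False
      have "(\<integral>\<^sup>+ z. Rf k (xs @ [z]) \<partial>measure_pmf (offspring_sum p (last xs)))
          \<le> (\<integral>\<^sup>+ z. of_nat (min (0 + z) k) \<partial>measure_pmf (offspring_sum p (last xs)))"
        by (rule nn_integral_mono) (simp add: Rf_def)
      also have "\<dots> \<le> of_nat (0 + last xs)"
        using offs_lin[OF mean, where k=k and z="last xs"] by blast
      also have "\<dots> = Rf k xs"
        using False last_le_path_max[OF ne] by (simp add: Rf_def)
      finally show ?thesis .
    qed
  qed
  also have "\<dots> \<le> 1" by (rule Suc.IH)
  finally show ?case .
qed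

lemma path_Phi:
  fixes p :: "nat pmf" and k n :: nat
  assumes mean: "(\<integral>\<^sup>+ x. ennreal (real x) \<partial>measure_pmf p) = 1"
  defines "V \<equiv> (\<integral>\<^sup>+ a. of_nat ((tr k a)^2) \<partial>measure_pmf p)"
  defines "Pb \<equiv> emeasure (measure_pmf p) {x. k < 2*x}"
  shows "(\<integral>\<^sup>+ xs. Phi k xs \<partial>measure_pmf (gw_path p n)) \<le> 1 + of_nat n * (V + of_nat (k^2) * Pb)"
proof (induction n)
  case 0
  have "k \<le> 1 \<Longrightarrow> k^2 \<le> (1::nat)" by (cases k) auto
  then show ?case by (auto simp add: Phi_def path_max_def)
next
  case (Suc n)
  have "(\<integral>\<^sup>+ xs. Phi k xs \<partial>measure_pmf (gw_path p (Suc n)))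
      = (\<integral>\<^sup>+ xs. (\<integral>\<^sup>+ z. Phi k (xs @ [z]) \<partial>measure_pmf (offspring_sum p (last xs))) \<partial>gw_path p n)"
    by simp
  also have "\<dots> \<le> (\<integral>\<^sup>+ xs. Phi k xs + Rf k xs * (V + of_nat (k^2) * Pb) \<partial>gw_path p n)"
  proof (rule nn_integral_mono_AE, rule AE_pmfI)
    fix xs assume xs: "xs \<in> set_pmf (gw_path p n)"
    then have ne: "xs \<noteq> []" by (rule gw_nonempty)
    show "(\<integral>\<^sup>+ z. Phi k (xs @ [z]) \<partial>measure_pmf (offspring_sum p (last xs))) \<le> Phi k xs + Rf k xs * (V + of_nat (k^2) * Pb)"
    proof (cases "k \<le> path_max xs")
      case True
      then have "\<And>z. Phi k (xs @ [z]) = Phi k xs" using ne by (simp add: Phi_def path_max_snoc le_max_iff_disj)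
      then show ?thesis by (simp add: emeasure_pmf)
    next
      case False
      have "(\<integral>\<^sup>+ z. Phi k (xs @ [z]) \<partial>measure_pmf (offspring_sum p (last xs)))
          = (\<integral>\<^sup>+ z. of_nat ((min (0 + z) k)^2) \<partial>measure_pmf (offspring_sum p (last xs)))"
        using False ne by (intro nn_integral_cong) (auto simp add: Phi_def path_max_snoc min_def)
      also have "\<dots> \<le> of_nat ((0 + last xs)^2) + of_nat (last xs) * V + of_nat (k^2) * of_nat (last xs) * Pb"
        using offs_sq[OF mean, where k=k and z="last xs"] unfolding V_def Pb_def by blast
      also have "\<dots> = Phi k xs + Rf k xs * (V + of_nat (k^2) * Pb)"
        using False last_le_path_max[OF ne] by (simp add: Phi_def Rf_def algebra_simps)
      finally show ?thesis by simp
    qed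
  qed
  also have "\<dots> = (\<integral>\<^sup>+ xs. Phi k xs \<partial>gw_path p n) + (\<integral>\<^sup>+ xs. Rf k xs \<partial>gw_path p n) * (V + of_nat (k^2) * Pb)"
    by (simp add: nn_integral_add nn_integral_multc)
  also have "\<dots> \<le> (1 + of_nat n * (V + of_nat (k^2) * Pb)) + 1 * (V + of_nat (k^2) * Pb)"
    by (intro add_mono mult_right_mono Suc.IH path_R[OF mean]) auto
  also have "\<dots> = 1 + of_nat (Suc n) * (V + of_nat (k^2) * Pb)"
    by (simp add: algebra_simps)
  finally show ?case .
qed

lemma xx_nonneg: "0 \<le> real x * (real x - 1)"
  by (cases x) auto

lemma trunc_B_nonneg: "0 \<le> trunc_B p k"
  unfolding trunc_B_def by (intro sum_nonneg mult_nonneg_nonneg xx_nonneg) auto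

lemma trunc_B_mono: "k0 \<le> k \<Longrightarrow> trunc_B p k0 \<le> trunc_B p k"
  unfolding trunc_B_def by (intro sum_mono2) (auto intro!: mult_nonneg_nonneg xx_nonneg)

lemma V_bound:
  fixes p :: "nat pmf" and k :: nat
  assumes mean: "(\<integral>\<^sup>+ x. ennreal (real x) \<partial>measure_pmf p) = 1"
  shows "(\<integral>\<^sup>+ a. of_nat ((tr k a)^2) \<partial>measure_pmf p) \<le> ennreal (trunc_B p k) + 1"
proof -
  have "(\<integral>\<^sup>+ a. of_nat ((tr k a)^2) \<partial>measure_pmf p)
     \<le> (\<integral>\<^sup>+ a. ennreal (if a \<le> k then real a * (real a - 1) else 0) + ennreal (real a) \<partial>measure_pmf p)"
  proof (rule nn_integral_mono)
    fix a
    show "of_nat ((tr k a)^2) \<le> ennreal (if a \<le> k then real a * (real a - 1) else 0) + ennreal (real a)"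
    proof (cases "k < 2*a")
      case True then show ?thesis by (simp add: tr_def)
    next
      case False
      then have "a \<le> k" by simp
      have "(of_nat ((tr k a)^2) :: ennreal) = ennreal (real a * (real a - 1) + real a)"
        using False by (simp add: tr_def ennreal_of_nat_eq_real_of_nat power2_eq_square algebra_simps)
      also have "\<dots> = ennreal (real a * (real a - 1)) + ennreal (real a)"
        by (rule ennreal_plus) (auto simp: xx_nonneg)
      finally show ?thesis using \<open>a \<le> k\<close> by simp
    qed
  qed
  also have "\<dots> = (\<integral>\<^sup>+ a. ennreal (if a \<le> k then real a * (real a - 1) else 0) \<partial>measure_pmf p) + 1"
    using mean by (subst nn_integral_add) auto
  also have "(\<integral>\<^sup>+ a. ennreal (if a \<le> k then real a * (real a - 1) else 0) \<partial>measure_pmf p)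
      = (\<Sum>x\<in>{..k}. ennreal (if x \<le> k then real x * (real x - 1) else 0) * pmf p x)"
    by (rule nn_integral_measure_pmf_support) auto
  also have "\<dots> = (\<Sum>x\<in>{..k}. ennreal (real x * (real x - 1) * pmf p x))"
    by (intro sum.cong refl) (auto simp: ennreal_mult xx_nonneg)
  also have "\<dots> = ennreal (trunc_B p k)"
    unfolding trunc_B_def by (rule sum_ennreal) (auto intro!: mult_nonneg_nonneg xx_nonneg)
  finally show ?thesis .
qed

lemma main_bound:
  fixes p :: "nat pmf" and k m :: nat
  assumes mean: "(\<integral>\<^sup>+ x. ennreal (real x) \<partial>measure_pmf p) = 1"
  shows "real (k^2) * measure_pmf.prob (gw_path p m) {xs. path_max xs \<ge> k}
     \<le> 1 + real m * (trunc_B p k + 1 + real (k^2) * measure_pmf.prob p {x. real x > real k / 2})"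
proof -
  define S where "S = {xs. path_max xs \<ge> k}"
  define V where "V = (\<integral>\<^sup>+ a. of_nat ((tr k a)^2) \<partial>measure_pmf p)"
  define Pb where "Pb = emeasure (measure_pmf p) {x. k < 2*x}"
  define Pr where "Pr = measure_pmf.prob (gw_path p m) S"
  define Pbr where "Pbr = measure_pmf.prob p {x. real x > real k / 2}"
  have setq: "{x. k < 2*x} = {x::nat. real x > real k / 2}" by auto
  have PbPbr: "Pb = ennreal Pbr"
    unfolding Pb_def Pbr_def setq by (simp add: measure_pmf.emeasure_eq_measure)
  have "ennreal (real (k^2) * Pr) = of_nat (k^2) * emeasure (measure_pmf (gw_path p m)) S"
    unfolding Pr_def by (simp add: measure_pmf.emeasure_eq_measure ennreal_mult ennreal_of_nat_eq_real_of_nat)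
  also have "\<dots> = (\<integral>\<^sup>+ xs. of_nat (k^2) * indicator S xs \<partial>measure_pmf (gw_path p m))"
    by (simp add: nn_integral_cmult_indicator)
  also have "\<dots> \<le> (\<integral>\<^sup>+ xs. Phi k xs \<partial>measure_pmf (gw_path p m))"
    by (rule nn_integral_mono) (auto simp: S_def Phi_def indicator_def)
  also have "\<dots> \<le> 1 + of_nat m * (V + of_nat (k^2) * Pb)"
    unfolding V_def Pb_def by (rule path_Phi[OF mean])
  also have "\<dots> \<le> 1 + of_nat m * ((ennreal (trunc_B p k) + 1) + of_nat (k^2) * ennreal Pbr)"
    unfolding PbPbr V_def using V_bound[OF mean, of k] by (intro add_mono mult_left_mono order_refl) auto
  also have "\<dots> = ennreal (1 + real m * (trunc_B p k + 1 + real (k^2) * Pbr))"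
    using trunc_B_nonneg[of p k]
    by (simp add: ennreal_plus ennreal_mult ennreal_of_nat_eq_real_of_nat Pbr_def)
  finally have "ennreal (real (k^2) * Pr) \<le> ennreal (1 + real m * (trunc_B p k + 1 + real (k^2) * Pbr))" .
  then show ?thesis
    unfolding Pr_def S_def Pbr_def using trunc_B_nonneg[of p k]
    by (subst (asm) ennreal_le_iff) (auto intro!: add_nonneg_nonneg mult_nonneg_nonneg)
qed

theorem lemma8:
  fixes p :: "nat pmf"
  assumes mean_one: "(\<integral>\<^sup>+ x. ennreal (real x) \<partial>measure_pmf p) = 1"
    and nondeg: "pmf p 1 < 1"
  shows "\<exists>c1 c2 :: real. \<forall>k m :: nat. k \<ge> 1 \<and> m \<ge> 1 \<and>
           real k / (real m * trunc_B p k) > c2 \<longrightarrow>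
           measure_pmf.prob (gw_path p m) {xs. path_max xs \<ge> k}
             \<le> c1 * real m * trunc_B p k / (real k)^2
                + real m * measure_pmf.prob p {x. real x > real k / 2}"
proof (cases "\<exists>k. 0 < trunc_B p k")
  case False
  show ?thesis
  proof (intro exI allI impI)
    fix k m :: nat
    assume h: "k \<ge> 1 \<and> m \<ge> 1 \<and> real k / (real m * trunc_B p k) > 0"
    have "trunc_B p k = 0" using False trunc_B_nonneg[of p k] by (metis order_less_le)
    then show "measure_pmf.prob (gw_path p m) {xs. path_max xs \<ge> k}
             \<le> 0 * real m * trunc_B p k / (real k)^2
                + real m * measure_pmf.prob p {x. real x > real k / 2}"
      using h by simp
  qed
next
  case True
  define k0 where "k0 = (LEAST k. 0 < trunc_B p k)"
  define b0 where "b0 = trunc_B p k0"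
  have b0: "0 < b0" unfolding b0_def k0_def using True by (rule LeastI_ex)
  show ?thesis
  proof (intro exI allI impI)
    fix k m :: nat
    assume h: "k \<ge> 1 \<and> m \<ge> 1 \<and> real k / (real m * trunc_B p k) > 0"
    define B where "B = trunc_B p k"
    define P where "P = measure_pmf.prob (gw_path p m) {xs. path_max xs \<ge> k}"
    define Pbr where "Pbr = measure_pmf.prob p {x. real x > real k / 2}"
    have B0: "0 \<le> B" unfolding B_def by (rule trunc_B_nonneg)
    have "B \<noteq> 0" using h unfolding B_def by auto
    then have Bpos: "0 < B" using B0 by simp
    then have "k0 \<le> k" unfolding k0_def B_def by (intro Least_le)
    then have b0B: "b0 \<le> B" unfolding b0_def B_def by (rule trunc_B_mono)
    have kpos: "0 < real k" using h by simp
    have mb: "real (k^2) * P \<le> 1 + real m * (B + 1 + real (k^2) * Pbr)"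
      unfolding P_def B_def Pbr_def by (rule main_bound[OF mean_one])
    have m1: "1 \<le> real m" using h by simp
    have "1 + real m * (B + 1) \<le> 2 * real m + real m * B" using m1 by (simp add: algebra_simps)
    also have "2 * real m \<le> 2 * real m * (B / b0)"
    proof -
      have "1 \<le> B / b0" using b0 b0B by simp
      then show ?thesis using m1 mult_left_mono[of 1 "B / b0" "2 * real m"] by simp
    qed
    finally have key: "1 + real m * (B + 1) \<le> (2 / b0 + 1) * real m * B"
      by (simp add: algebra_simps)
    have "real (k^2) * P \<le> (2 / b0 + 1) * real m * B + real (k^2) * (real m * Pbr)"
      using mb key by (simp add: algebra_simps)
    then have "P \<le> ((2 / b0 + 1) * real m * B + real (k^2) * (real m * Pbr)) / real (k^2)"
      using kpos by (simp add: field_simps)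
    also have "\<dots> = (2 / b0 + 1) * real m * B / (real k)^2 + real m * Pbr"
      using kpos by (simp add: field_simps)
    finally show "measure_pmf.prob (gw_path p m) {xs. path_max xs \<ge> k}
             \<le> (2 / b0 + 1) * real m * trunc_B p k / (real k)^2
                + real m * measure_pmf.prob p {x. real x > real k / 2}"
      unfolding P_def B_def Pbr_def .
  qed
qed

end
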